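(* Let $\mathfrak{A}$ be a $(\circ,\wedge,\mathsf{A})$-algebra that is representable by partial functions, and let $a\in\mathfrak{A}$. Then the down-set ${\downarrow}a=\{b\in\mathfrak{A}\mid b\le a\}$, with least element $0$, greatest element $a$, meet given by $\wedge$, and complementation given by $\overline{b}:=\mathsf{A}(b)\circ a$, is a Boolean algebra. Moreover, for any representation $\theta$ of $\mathfrak{A}$ by partial functions, the restriction of $\theta$ to ${\downarrow}a$ is a representation of this Boolean algebra as a field of subsets of $\theta(a)$ (i.e. it is injective, $\theta(0)=\emptyset$, $\theta(b\wedge c)=\theta(b)\cap\theta(c)$, and $\theta(\overline{b})=\theta(a)\setminus\theta(b)$ for $b,c\le a$). If $\theta$ is meet complete or join complete, then this representation of ${\downarrow}a$ as a field of sets is complete (every existing join in ${\downarrow}a$ is sent to the union, and every existing meet of a nonempty subset is sent to the intersection).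
   Context: A $(\circ,\wedge,\mathsf{A})$-algebra is a set with two binary operations $\circ,\wedge$ and one unary operation $\mathsf{A}$. An algebra of partial functions of this signature is a set of partial functions (viewed as sets of ordered pairs), with base $X$ the union of all their domains and ranges, closed under: composition $f\circ g=\{(x,z)\mid \exists y\,(x,y)\in f,(y,z)\in g\}$ (apply $f$ first, then $g$); intersection $f\wedge g=f\cap g$; antidomain $\mathsf{A}(f)=\{(x,x)\mid x\in X, x\notin\mathrm{dom}(f)\}$. A representation by partial functions is an isomorphism onto such an algebra; $\mathfrak{A}$ is representable if one exists. A representable algebra is a $\wedge$-semilattice, ordered by $a\le b\iff a\wedge b=a$, with least element $0=\mathsf{A}(a)\circ a$ (any $a$), always represented by $\emptyset$. A representation $\theta$ is meet complete if for every nonempty $S\subseteq\mathfrak{A}$ such that $\bigwedge S$ exists, $\theta(\bigwedge S)=\bigcap\theta[S]$; it is join complete if for every $S\subseteq\mathfrak{A}$ such that $\bigvee S$ exists, $\theta(\bigvee S)=\bigcup\theta[S]$. *)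

theory Defs
  imports Main
begin

text \<open>An algebra of signature (cmp, meet, antidom) is given by its three operations on
  a carrier type 'a.  A partial function on a base is a single-valued relation.\<close>

definition base :: "('a \<Rightarrow> ('x \<times> 'x) set) \<Rightarrow> 'x set" where
  "base \<theta> = (\<Union>f. Domain (\<theta> f) \<union> Range (\<theta> f))"

definition is_representation ::
  "('a \<Rightarrow> 'a \<Rightarrow> 'a) \<Rightarrow> ('a \<Rightarrow> 'a \<Rightarrow> 'a) \<Rightarrow> ('a \<Rightarrow> 'a)
   \<Rightarrow> ('a \<Rightarrow> ('x \<times> 'x) set) \<Rightarrow> bool" where
  "is_representation cmp meet antidom \<theta> \<longleftrightarrow>
     inj \<theta> \<and>
     (\<forall>f. single_valued (\<theta> f)) \<and>
     (\<forall>f g. \<theta> (cmp f g) = \<theta> f O \<theta> g) \<and>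
     (\<forall>f g. \<theta> (meet f g) = \<theta> f \<inter> \<theta> g) \<and>
     (\<forall>f. \<theta> (antidom f) = {(x, x) | x. x \<in> base \<theta> \<and> x \<notin> Domain (\<theta> f)})"

definition alg_le :: "('a \<Rightarrow> 'a \<Rightarrow> 'a) \<Rightarrow> 'a \<Rightarrow> 'a \<Rightarrow> bool" where
  "alg_le meet x y \<longleftrightarrow> meet x y = x"

definition downset :: "('a \<Rightarrow> 'a \<Rightarrow> 'a) \<Rightarrow> 'a \<Rightarrow> 'a set" where
  "downset meet a = {b. alg_le meet b a}"

definition is_lub_in :: "('a \<Rightarrow> 'a \<Rightarrow> 'a) \<Rightarrow> 'a set \<Rightarrow> 'a set \<Rightarrow> 'a \<Rightarrow> bool" where
  "is_lub_in meet D S x \<longleftrightarrow> x \<in> D \<and> (\<forall>s\<in>S. alg_le meet s x) \<and>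
     (\<forall>u\<in>D. (\<forall>s\<in>S. alg_le meet s u) \<longrightarrow> alg_le meet x u)"

definition is_glb_in :: "('a \<Rightarrow> 'a \<Rightarrow> 'a) \<Rightarrow> 'a set \<Rightarrow> 'a set \<Rightarrow> 'a \<Rightarrow> bool" where
  "is_glb_in meet D S x \<longleftrightarrow> x \<in> D \<and> (\<forall>s\<in>S. alg_le meet x s) \<and>
     (\<forall>u\<in>D. (\<forall>s\<in>S. alg_le meet u s) \<longrightarrow> alg_le meet u x)"

definition meet_complete ::
  "('a \<Rightarrow> 'a \<Rightarrow> 'a) \<Rightarrow> ('a \<Rightarrow> ('x \<times> 'x) set) \<Rightarrow> bool" where
  "meet_complete meet \<theta> \<longleftrightarrow>
     (\<forall>S m. S \<noteq> {} \<longrightarrow> is_glb_in meet UNIV S m \<longrightarrow> \<theta> m = \<Inter> (\<theta> ` S))"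

definition join_complete ::
  "('a \<Rightarrow> 'a \<Rightarrow> 'a) \<Rightarrow> ('a \<Rightarrow> ('x \<times> 'x) set) \<Rightarrow> bool" where
  "join_complete meet \<theta> \<longleftrightarrow>
     (\<forall>S j. is_lub_in meet UNIV S j \<longrightarrow> \<theta> j = \<Union> (\<theta> ` S))"

definition boolean_algebra_on ::
  "'a set \<Rightarrow> ('a \<Rightarrow> 'a \<Rightarrow> 'a) \<Rightarrow> ('a \<Rightarrow> 'a) \<Rightarrow> 'a \<Rightarrow> 'a \<Rightarrow> bool" where
  "boolean_algebra_on B mt cp z t \<longleftrightarrow>
    (let jn = (\<lambda>x y. cp (mt (cp x) (cp y))) in
     z \<in> B \<and> t \<in> B \<and>
     (\<forall>x\<in>B. \<forall>y\<in>B. mt x y \<in> B) \<and> (\<forall>x\<in>B. cp x \<in> B) \<and>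
     (\<forall>x\<in>B. \<forall>y\<in>B. mt x y = mt y x \<and> jn x y = jn y x) \<and>
     (\<forall>x\<in>B. \<forall>y\<in>B. \<forall>w\<in>B. mt x (mt y w) = mt (mt x y) w \<and> jn x (jn y w) = jn (jn x y) w) \<and>
     (\<forall>x\<in>B. \<forall>y\<in>B. mt x (jn x y) = x \<and> jn x (mt x y) = x) \<and>
     (\<forall>x\<in>B. \<forall>y\<in>B. \<forall>w\<in>B. mt x (jn y w) = jn (mt x y) (mt x w)) \<and>
     (\<forall>x\<in>B. mt x z = z \<and> mt x t = x) \<and>
     (\<forall>x\<in>B. mt x (cp x) = z \<and> jn x (cp x) = t))"

end

theory Submission
  imports Defs
begin

lemma rep_meet: "is_representation cmp meet antidom \<theta> \<Longrightarrow> \<theta> (meet f g) = \<theta> f \<inter> \<theta> g"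
  by (simp add: is_representation_def)
lemma rep_inj: "is_representation cmp meet antidom \<theta> \<Longrightarrow> \<theta> x = \<theta> y \<longleftrightarrow> x = y"
  by (auto simp add: is_representation_def inj_eq)
lemma rep_le: "is_representation cmp meet antidom \<theta> \<Longrightarrow> alg_le meet x y \<longleftrightarrow> \<theta> x \<subseteq> \<theta> y"
  unfolding alg_le_def
  by (metis rep_inj rep_meet Int_absorb2 inf.absorb_iff1)
lemma rep_D: "is_representation cmp meet antidom \<theta> \<Longrightarrow> x \<in> downset meet a \<longleftrightarrow> \<theta> x \<subseteq> \<theta> a"
  unfolding downset_def using rep_le by fastforce

lemma rep_cmpl:
  assumes r: "is_representation cmp meet antidom \<theta>" and b: "\<theta> b \<subseteq> \<theta> a"
  shows "\<theta> (cmp (antidom b) a) = \<theta> a - \<theta> b"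
proof -
  have sv: "single_valued (\<theta> a)" using r by (simp add: is_representation_def)
  have e: "\<theta> (cmp (antidom b) a) = {(x, x) | x. x \<in> base \<theta> \<and> x \<notin> Domain (\<theta> b)} O \<theta> a"
    using r by (simp add: is_representation_def)
  have "Domain (\<theta> a) \<subseteq> base \<theta>" unfolding base_def by blast
  then show ?thesis unfolding e using b sv
    by (auto simp: single_valued_def) blast+
qed

lemma rep_zero:
  assumes r: "is_representation cmp meet antidom \<theta>"
  shows "\<theta> (cmp (antidom a) a) = {}"
  using rep_cmpl[OF r, of a a] by simp

theorem mainTheorem1:
  fixes cmp meet :: "'a \<Rightarrow> 'a \<Rightarrow> 'a" and antidom :: "'a \<Rightarrow> 'a"
    and \<theta> :: "'a \<Rightarrow> ('x \<times> 'x) set" and a :: 'a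
  assumes rep: "is_representation cmp meet antidom \<theta>"
  defines "zero \<equiv> cmp (antidom a) a"
  defines "cmpl \<equiv> (\<lambda>b. cmp (antidom b) a)"
  shows "boolean_algebra_on (downset meet a) meet cmpl zero a
    \<and> inj_on \<theta> (downset meet a)
    \<and> \<theta> zero = {}
    \<and> (\<forall>b\<in>downset meet a. \<forall>c\<in>downset meet a. \<theta> (meet b c) = \<theta> b \<inter> \<theta> c)
    \<and> (\<forall>b\<in>downset meet a. \<theta> (cmpl b) = \<theta> a - \<theta> b)
    \<and> ((meet_complete meet \<theta> \<or> join_complete meet \<theta>) \<longrightarrow>
        (\<forall>S j. S \<subseteq> downset meet a \<longrightarrow> is_lub_in meet (downset meet a) S j
               \<longrightarrow> \<theta> j = \<Union> (\<theta> ` S)) \<and>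
        (\<forall>S m. S \<subseteq> downset meet a \<longrightarrow> S \<noteq> {} \<longrightarrow> is_glb_in meet (downset meet a) S m
               \<longrightarrow> \<theta> m = \<Inter> (\<theta> ` S)))"
proof -
  let ?D = "downset meet a"
  have D: "\<And>x. x \<in> ?D \<longleftrightarrow> \<theta> x \<subseteq> \<theta> a" using rep_D[OF rep] .
  have M: "\<And>x y. \<theta> (meet x y) = \<theta> x \<inter> \<theta> y" using rep_meet[OF rep] .
  have I: "\<And>x y. \<theta> x = \<theta> y \<longleftrightarrow> x = y" using rep_inj[OF rep] .
  have L: "\<And>x y. alg_le meet x y \<longleftrightarrow> \<theta> x \<subseteq> \<theta> y" using rep_le[OF rep] .
  have C: "\<And>b. \<theta> b \<subseteq> \<theta> a \<Longrightarrow> \<theta> (cmpl b) = \<theta> a - \<theta> b"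
    unfolding cmpl_def using rep_cmpl[OF rep] .
  have Z: "\<theta> zero = {}" unfolding zero_def using rep_zero[OF rep] .
  have CD: "\<And>b. \<theta> (cmpl b) \<subseteq> \<theta> a"
  proof -
    fix b
    have "\<theta> (cmpl b) = {(x, x) | x. x \<in> base \<theta> \<and> x \<notin> Domain (\<theta> b)} O \<theta> a"
      using rep by (simp add: is_representation_def cmpl_def)
    then show "\<theta> (cmpl b) \<subseteq> \<theta> a" by auto
  qed
  have J: "\<And>x y. \<theta> x \<subseteq> \<theta> a \<Longrightarrow> \<theta> y \<subseteq> \<theta> a \<Longrightarrow>
      \<theta> (cmpl (meet (cmpl x) (cmpl y))) = \<theta> x \<union> \<theta> y"
  proof -
    fix x y assume "\<theta> x \<subseteq> \<theta> a" "\<theta> y \<subseteq> \<theta> a"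
    have "\<theta> (meet (cmpl x) (cmpl y)) \<subseteq> \<theta> a" using CD M by blast
    then have "\<theta> (cmpl (meet (cmpl x) (cmpl y))) = \<theta> a - (\<theta> (cmpl x) \<inter> \<theta> (cmpl y))"
      using C M by simp
    then show "\<theta> (cmpl (meet (cmpl x) (cmpl y))) = \<theta> x \<union> \<theta> y"
      using C \<open>\<theta> x \<subseteq> \<theta> a\<close> \<open>\<theta> y \<subseteq> \<theta> a\<close> by auto
  qed
  have BA: "boolean_algebra_on ?D meet cmpl zero a"
    unfolding boolean_algebra_on_def Let_def
  proof (intro conjI ballI)
    show "zero \<in> ?D" using Z D by simp
    show "a \<in> ?D" using D by simp
  next
    fix x y assume x: "x \<in> ?D" and y: "y \<in> ?D"
    then have x': "\<theta> x \<subseteq> \<theta> a" and y': "\<theta> y \<subseteq> \<theta> a" using D by auto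
    show "meet x y \<in> ?D" using x' by (auto simp: M D)
    show "meet x y = meet y x" by (subst I[symmetric]) (simp add: M Int_commute)
    show "cmpl (meet (cmpl x) (cmpl y)) = cmpl (meet (cmpl y) (cmpl x))"
      by (subst I[symmetric]) (simp add: J x' y' Un_commute)
    show "meet x (cmpl (meet (cmpl x) (cmpl y))) = x"
      by (subst I[symmetric]) (simp add: J M x' y' Int_absorb)
    show "cmpl (meet (cmpl x) (cmpl (meet x y))) = x"
      using x' y' by (subst I[symmetric]) (simp add: J M le_infI1 Un_absorb)
  next
    fix x assume x: "x \<in> ?D"
    then have x': "\<theta> x \<subseteq> \<theta> a" using D by auto
    show "cmpl x \<in> ?D" using CD D by simp
    show "meet x zero = zero" by (subst I[symmetric]) (simp add: M Z)
    show "meet x a = x" by (subst I[symmetric]) (simp add: M x' Int_absorb2)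
    show "meet x (cmpl x) = zero" by (subst I[symmetric]) (simp add: M Z C x')
    show "cmpl (meet (cmpl x) (cmpl (cmpl x))) = a"
      using x' CD by (subst I[symmetric]) (simp add: J C Un_absorb1 Un_absorb2 Un_Diff_cancel)
  next
    fix x y w assume x: "x \<in> ?D" and y: "y \<in> ?D"
      and w: "w \<in> ?D"
    then have x': "\<theta> x \<subseteq> \<theta> a" and y': "\<theta> y \<subseteq> \<theta> a" and w': "\<theta> w \<subseteq> \<theta> a" using D by auto
    show "meet x (meet y w) = meet (meet x y) w"
      by (subst I[symmetric]) (simp add: M Int_assoc)
    show "cmpl (meet (cmpl x) (cmpl (cmpl (meet (cmpl y) (cmpl w))))) =
          cmpl (meet (cmpl (cmpl (meet (cmpl x) (cmpl y)))) (cmpl w))"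
      using x' y' w' by (subst I[symmetric]) (simp add: J Un_assoc)
    show "meet x (cmpl (meet (cmpl y) (cmpl w))) =
          cmpl (meet (cmpl (meet x y)) (cmpl (meet x w)))"
      using x' y' w' by (subst I[symmetric]) (simp add: J M le_infI1 Int_Un_distrib)
  qed
  have lubU: "\<And>S j. S \<subseteq> ?D \<Longrightarrow> is_lub_in meet ?D S j \<Longrightarrow> is_lub_in meet UNIV S j"
  proof -
    fix S j assume S: "S \<subseteq> ?D" and j: "is_lub_in meet ?D S j"
    show "is_lub_in meet UNIV S j" unfolding is_lub_in_def
    proof (intro conjI ballI impI)
      show "\<And>s. s \<in> S \<Longrightarrow> alg_le meet s j" using j unfolding is_lub_in_def by blast
      fix u assume u: "\<forall>s\<in>S. alg_le meet s u"
      have "meet u a \<in> ?D" using D M by auto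
      moreover have "\<forall>s\<in>S. alg_le meet s (meet u a)" using u S D unfolding L M by blast
      ultimately have "alg_le meet j (meet u a)" using j unfolding is_lub_in_def by blast
      then show "alg_le meet j u" by (auto simp: L M)
    qed simp
  qed
  have glbU: "\<And>S m. S \<subseteq> ?D \<Longrightarrow> S \<noteq> {} \<Longrightarrow> is_glb_in meet ?D S m \<Longrightarrow> is_glb_in meet UNIV S m"
  proof -
    fix S m assume S: "S \<subseteq> ?D" and ne: "S \<noteq> {}" and m: "is_glb_in meet ?D S m"
    show "is_glb_in meet UNIV S m" unfolding is_glb_in_def
    proof (intro conjI ballI impI)
      show "\<And>s. s \<in> S \<Longrightarrow> alg_le meet m s" using m unfolding is_glb_in_def by blast
      fix u assume u: "\<forall>s\<in>S. alg_le meet u s"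
      obtain s0 where "s0 \<in> S" using ne by blast
      then have "u \<in> ?D" using u S D L by blast
      then show "alg_le meet u m" using u m unfolding is_glb_in_def by blast
    qed simp
  qed
  have lub_glb: "\<And>S j. S \<subseteq> ?D \<Longrightarrow> is_lub_in meet ?D S j \<Longrightarrow> is_glb_in meet ?D (cmpl ` S) (cmpl j)"
  proof -
    fix S j assume S: "S \<subseteq> ?D" and j: "is_lub_in meet ?D S j"
    have jD: "\<theta> j \<subseteq> \<theta> a" and ub: "\<forall>s\<in>S. \<theta> s \<subseteq> \<theta> j"
      and least: "\<forall>u. \<theta> u \<subseteq> \<theta> a \<longrightarrow> (\<forall>s\<in>S. \<theta> s \<subseteq> \<theta> u) \<longrightarrow> \<theta> j \<subseteq> \<theta> u"
      using j unfolding is_lub_in_def by (auto simp: L D)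
    have SD: "\<forall>s\<in>S. \<theta> s \<subseteq> \<theta> a" using S D by blast
    show "is_glb_in meet ?D (cmpl ` S) (cmpl j)" unfolding is_glb_in_def
    proof (intro conjI ballI impI)
      show "cmpl j \<in> ?D" using CD D by simp
      fix t assume "t \<in> cmpl ` S"
      then obtain s where s: "s \<in> S" "t = cmpl s" by blast
      show "alg_le meet (cmpl j) t" using s jD SD ub by (auto simp: L C)
    next
      fix u assume uD: "u \<in> ?D" and u: "\<forall>t\<in>cmpl ` S. alg_le meet u t"
      have u': "\<theta> u \<subseteq> \<theta> a" using uD D by blast
      have "\<forall>s\<in>S. \<theta> s \<subseteq> \<theta> (cmpl u)"
      proof
        fix s assume s: "s \<in> S"
        then have "\<theta> u \<subseteq> \<theta> a - \<theta> s" using u SD by (auto simp: L C)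
        then show "\<theta> s \<subseteq> \<theta> (cmpl u)" using s SD u' by (auto simp: C)
      qed
      then have "\<theta> j \<subseteq> \<theta> (cmpl u)" using least CD by blast
      then show "alg_le meet u (cmpl j)" using u' jD by (auto simp: L C)
    qed
  qed
  have glb_lub: "\<And>S m. S \<subseteq> ?D \<Longrightarrow> is_glb_in meet ?D S m \<Longrightarrow> is_lub_in meet ?D (cmpl ` S) (cmpl m)"
  proof -
    fix S m assume S: "S \<subseteq> ?D" and m: "is_glb_in meet ?D S m"
    have mD: "\<theta> m \<subseteq> \<theta> a" and lb: "\<forall>s\<in>S. \<theta> m \<subseteq> \<theta> s"
      and gr: "\<forall>u. \<theta> u \<subseteq> \<theta> a \<longrightarrow> (\<forall>s\<in>S. \<theta> u \<subseteq> \<theta> s) \<longrightarrow> \<theta> u \<subseteq> \<theta> m"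
      using m unfolding is_glb_in_def by (auto simp: L D)
    have SD: "\<forall>s\<in>S. \<theta> s \<subseteq> \<theta> a" using S D by blast
    show "is_lub_in meet ?D (cmpl ` S) (cmpl m)" unfolding is_lub_in_def
    proof (intro conjI ballI impI)
      show "cmpl m \<in> ?D" using CD D by simp
      fix t assume "t \<in> cmpl ` S"
      then obtain s where s: "s \<in> S" "t = cmpl s" by blast
      show "alg_le meet t (cmpl m)" using s mD SD lb by (auto simp: L C)
    next
      fix u assume uD: "u \<in> ?D" and u: "\<forall>t\<in>cmpl ` S. alg_le meet t u"
      have u': "\<theta> u \<subseteq> \<theta> a" using uD D by blast
      have "\<forall>s\<in>S. \<theta> (cmpl u) \<subseteq> \<theta> s"
      proof
        fix s assume s: "s \<in> S"
        then have "\<theta> a - \<theta> s \<subseteq> \<theta> u" using u SD by (auto simp: L C)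
        then show "\<theta> (cmpl u) \<subseteq> \<theta> s" using s SD u' by (auto simp: C)
      qed
      then have "\<theta> (cmpl u) \<subseteq> \<theta> m" using gr CD by blast
      then show "alg_le meet (cmpl m) u" using u' mD by (auto simp: L C)
    qed
  qed
  have inj: "inj_on \<theta> ?D" using I by (auto simp: inj_on_def)
  have MC: "meet_complete meet \<theta> \<or> join_complete meet \<theta> \<Longrightarrow>
        (\<forall>S j. S \<subseteq> ?D \<longrightarrow> is_lub_in meet ?D S j \<longrightarrow> \<theta> j = \<Union> (\<theta> ` S)) \<and>
        (\<forall>S m. S \<subseteq> ?D \<longrightarrow> S \<noteq> {} \<longrightarrow> is_glb_in meet ?D S m \<longrightarrow> \<theta> m = \<Inter> (\<theta> ` S))"
  proof (elim disjE)
    assume mc: "meet_complete meet \<theta>"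
    have G: "\<And>S m. S \<subseteq> ?D \<Longrightarrow> S \<noteq> {} \<Longrightarrow> is_glb_in meet ?D S m \<Longrightarrow> \<theta> m = \<Inter> (\<theta> ` S)"
      using mc[unfolded meet_complete_def, rule_format, OF _ glbU] by blast
    show ?thesis
    proof (intro conjI allI impI)
      fix S m assume "S \<subseteq> ?D" "S \<noteq> {}" "is_glb_in meet ?D S m"
      then show "\<theta> m = \<Inter> (\<theta> ` S)" by (rule G)
    next
      fix S j assume S: "S \<subseteq> ?D" and j: "is_lub_in meet ?D S j"
      have jD: "\<theta> j \<subseteq> \<theta> a" and ub: "\<forall>s\<in>S. \<theta> s \<subseteq> \<theta> j"
        using j unfolding is_lub_in_def by (auto simp: L D)
      have SD: "\<forall>s\<in>S. \<theta> s \<subseteq> \<theta> a" using S D by blast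
      show "\<theta> j = \<Union> (\<theta> ` S)"
      proof (cases "S = {}")
        case True
        have "zero \<in> ?D" using Z D by simp
        then have "\<theta> j \<subseteq> \<theta> zero" using j True unfolding is_lub_in_def by (auto simp: L)
        then show ?thesis using Z True by simp
      next
        case False
        have cS: "cmpl ` S \<subseteq> ?D" using CD D by auto
        have "\<theta> (cmpl j) = \<Inter> (\<theta> ` cmpl ` S)"
          using G[OF cS _ lub_glb[OF S j]] False by blast
        also have "\<theta> ` cmpl ` S = (\<lambda>s. \<theta> a - \<theta> s) ` S" unfolding image_image using SD C by (intro image_cong) auto
        finally have e: "\<theta> a - \<theta> j = (\<Inter>s\<in>S. \<theta> a - \<theta> s)" using C jD by simp
        show ?thesis
        proof
          show "\<Union> (\<theta> ` S) \<subseteq> \<theta> j" using ub by blast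
          show "\<theta> j \<subseteq> \<Union> (\<theta> ` S)"
          proof
            fix p assume p: "p \<in> \<theta> j"
            show "p \<in> \<Union> (\<theta> ` S)"
            proof (rule ccontr)
              assume "p \<notin> \<Union> (\<theta> ` S)"
              then have "p \<in> (\<Inter>s\<in>S. \<theta> a - \<theta> s)" using p jD by blast
              then show False using e p by blast
            qed
          qed
        qed
      qed
    qed
  next
    assume jc: "join_complete meet \<theta>"
    have G: "\<And>S j. S \<subseteq> ?D \<Longrightarrow> is_lub_in meet ?D S j \<Longrightarrow> \<theta> j = \<Union> (\<theta> ` S)"
      using jc[unfolded join_complete_def, rule_format, OF lubU] by blast
    show ?thesis
    proof (intro conjI allI impI)
      fix S j assume "S \<subseteq> ?D" "is_lub_in meet ?D S j"
      then show "\<theta> j = \<Union> (\<theta> ` S)" by (rule G)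
    next
      fix S m assume S: "S \<subseteq> ?D" and ne: "S \<noteq> {}" and m: "is_glb_in meet ?D S m"
      have mD: "\<theta> m \<subseteq> \<theta> a" and lb: "\<forall>s\<in>S. \<theta> m \<subseteq> \<theta> s"
        using m unfolding is_glb_in_def by (auto simp: L D)
      have SD: "\<forall>s\<in>S. \<theta> s \<subseteq> \<theta> a" using S D by blast
      have cS: "cmpl ` S \<subseteq> ?D" using CD D by auto
      have "\<theta> (cmpl m) = \<Union> (\<theta> ` cmpl ` S)"
        by (rule G[OF cS glb_lub[OF S m]])
      also have "\<theta> ` cmpl ` S = (\<lambda>s. \<theta> a - \<theta> s) ` S" unfolding image_image using SD C by (intro image_cong) auto
      finally have e: "\<theta> a - \<theta> m = (\<Union>s\<in>S. \<theta> a - \<theta> s)" using C mD by simp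
      obtain s0 where s0: "s0 \<in> S" using ne by blast
      show "\<theta> m = \<Inter> (\<theta> ` S)"
      proof
        show "\<theta> m \<subseteq> \<Inter> (\<theta> ` S)" using lb by blast
        show "\<Inter> (\<theta> ` S) \<subseteq> \<theta> m"
        proof
          fix p assume p: "p \<in> \<Inter> (\<theta> ` S)"
          then have pa: "p \<in> \<theta> a" using s0 SD by blast
          show "p \<in> \<theta> m"
          proof (rule ccontr)
            assume "p \<notin> \<theta> m"
            then have "p \<in> (\<Union>s\<in>S. \<theta> a - \<theta> s)" using e pa by blast
            then show False using p by blast
          qed
        qed
      qed
    qed
  qed
  show ?thesis
    apply (intro conjI)
    using BA apply assumption
    using inj apply assumption
    using Z apply assumption
    using M apply blast
    using C D apply blast
    using MC apply blast
    done
qed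

end
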